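(* Let $\sigma>0$, $\eta>0$, $\hat{\alpha}>0$, $h>0$, $r\ge 0$ and $a\in\mathbb{R}$ be constants. Then there exist a constant $\beta^*>0$ and a function $v\in C^1[0,\infty)$ such that $$\beta^* = -\frac{\hat{\alpha}}{4}v(y)^2 + \frac{1}{2}\sigma^2 v'(y) - \eta y\, v(y) + a\, v(y) + h y \quad \text{for all } y\ge 0,$$ $v(0)=-r$, $v$ is nondecreasing on $[0,\infty)$, and $\lim_{y\to\infty} v(y) = h/\eta$.
   Context: This is the (differentiated) Bellman equation of a one-dimensional drift-rate control problem: $\sigma^2$ is the variance and $a$ the drift of a Brownian motion, $\eta$ a mean-reversion rate, $\hat{\alpha}$ a quadratic control-cost parameter (control cost $x^2/\hat{\alpha}$), $h$ a holding-cost rate and $r$ a reflection (idleness) cost rate. *)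

theory Defs
  imports "HOL-Analysis.Analysis"
begin

end

theory Submission
  imports Defs
begin


fun cf :: "real \<Rightarrow> real \<Rightarrow> real \<Rightarrow> real \<Rightarrow> nat \<Rightarrow> real" where
  "cf A B \<rho> R 0 = 1"
| "cf A B \<rho> R (Suc 0) = \<rho>"
| "cf A B \<rho> R (Suc (Suc n)) = (B * real (Suc n) * cf A B \<rho> R (Suc n) + (A * real n - R) * cf A B \<rho> R n) / (real (Suc n) * real (Suc (Suc n)))"

lemma cf_step_bound:
  fixes L P A B R an an1 u v :: real
  assumes L1: "L \<ge> 1" and LB: "2 * \<bar>B\<bar> \<le> L" and LA: "2 * (A + \<bar>R\<bar>) \<le> L" and A: "A \<ge> 0"
    and u: "u = sqrt (real n + 1)" and v: "v = sqrt (real n + 2)"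
    and P: "P \<ge> 0"
    and h0: "\<bar>an\<bar> \<le> P" and h1: "\<bar>an1\<bar> \<le> P * L / u"
  shows "\<bar>(B * real (Suc n) * an1 + (A * real n - R) * an) / (real (Suc n) * real (Suc (Suc n)))\<bar> \<le> P * L^2 / (u * v)"
proof -
  have u1: "u \<ge> 1" using u by simp
  have v1: "v \<ge> 1" using v by simp
  have uv: "u \<le> v" using u v by simp
  have uu: "u * u = real n + 1" using u by simp
  have vv: "v * v = real n + 2" using v by simp
  have den: "real (Suc n) * real (Suc (Suc n)) = (u * u) * (v * v)" unfolding uu vv by (simp add: algebra_simps)
  have "\<bar>B * real (Suc n) * an1 + (A * real n - R) * an\<bar> \<le> \<bar>B\<bar> * (u * u) * \<bar>an1\<bar> + (A * real n + \<bar>R\<bar>) * \<bar>an\<bar>"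
  proof -
    have "\<bar>B * real (Suc n) * an1\<bar> = \<bar>B\<bar> * (u * u) * \<bar>an1\<bar>" using uu by (simp add: abs_mult)
    moreover have "\<bar>(A * real n - R) * an\<bar> \<le> (A * real n + \<bar>R\<bar>) * \<bar>an\<bar>"
    proof -
      have "0 \<le> A * real n" using A by simp
      then have "\<bar>A * real n - R\<bar> \<le> A * real n + \<bar>R\<bar>" by arith
      then show ?thesis by (simp add: abs_mult mult_right_mono)
    qed
    ultimately show ?thesis by linarith
  qed
  also have "\<dots> \<le> \<bar>B\<bar> * (u * u) * (P * L / u) + (A * real n + \<bar>R\<bar>) * P"
    by (intro add_mono mult_left_mono h0 h1) (use A in auto)
  also have "\<dots> = P * (\<bar>B\<bar> * L * u + (A * real n + \<bar>R\<bar>))" using u1 by (simp add: field_simps)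
  also have "\<dots> \<le> P * (L^2 * u * v)"
  proof (rule mult_left_mono[OF _ P])
    have "\<bar>B\<bar> * L * u \<le> (L/2) * L * u * v"
    proof -
      have Lu: "0 \<le> L * u" using L1 u1 by simp
      have "\<bar>B\<bar> * (L * u) \<le> (L/2) * (L * u)" by (rule mult_right_mono) (use LB Lu in auto)
      moreover have "((L/2) * (L * u)) * 1 \<le> ((L/2) * (L * u)) * v" by (rule mult_left_mono) (use v1 Lu L1 in auto)
      ultimately show ?thesis by (simp add: mult.assoc)
    qed
    moreover have "A * real n + \<bar>R\<bar> \<le> (A + \<bar>R\<bar>) * (u * u)"
      using uu A by (simp add: algebra_simps)
    moreover have "(A + \<bar>R\<bar>) * (u * u) \<le> (L/2) * (u * u)"
      using LA by (intro mult_right_mono) auto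
    moreover have "(L/2) * (u * u) \<le> (L/2) * L * u * v"
    proof -
      have "u * u \<le> 1 * (u * v)" using uv u1 by (simp add: mult_left_mono)
      also have "\<dots> \<le> L * (u * v)" by (rule mult_right_mono) (use L1 u1 v1 in auto)
      finally have "u * u \<le> L * (u * v)" .
      then show ?thesis using L1 by (simp add: mult.assoc)
    qed
    ultimately show "\<bar>B\<bar> * L * u + (A * real n + \<bar>R\<bar>) \<le> L^2 * u * v"
      by (simp add: power2_eq_square field_simps)
  qed
  finally have "\<bar>B * real (Suc n) * an1 + (A * real n - R) * an\<bar> \<le> P * (L^2 * u * v)" .
  then show ?thesis using u1 v1 den
    by (simp add: abs_divide divide_le_eq field_simps)
qed

lemma cf_bound:
  fixes A B \<rho> R Rb :: real
  assumes A: "A \<ge> 0" and Rb: "\<bar>R\<bar> \<le> Rb"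
  defines "L \<equiv> 1 + \<bar>\<rho>\<bar> + 2 * \<bar>B\<bar> + 2 * (A + Rb)"
  shows "\<bar>cf A B \<rho> R n\<bar> \<le> L ^ n / sqrt (fact n)"
proof -
  have L1: "L \<ge> 1" and LB: "2 * \<bar>B\<bar> \<le> L" and LA: "2 * (A + \<bar>R\<bar>) \<le> L" and Lr: "\<bar>\<rho>\<bar> \<le> L"
    using A Rb by (auto simp: L_def)
  have fs: "sqrt (fact (Suc n)) = sqrt (fact n) * sqrt (real n + 1)" for n
  proof -
    have "(fact (Suc n) :: real) = fact n * (real n + 1)" by (simp add: algebra_simps)
    then show ?thesis by (simp add: real_sqrt_mult)
  qed
  have key: "L ^ Suc n / sqrt (fact (Suc n)) = (L ^ n / sqrt (fact n)) * L / sqrt (real n + 1)" for n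
    unfolding fs power_Suc by (simp add: field_simps)
  have "\<bar>cf A B \<rho> R n\<bar> \<le> L ^ n / sqrt (fact n) \<and> \<bar>cf A B \<rho> R (Suc n)\<bar> \<le> L ^ Suc n / sqrt (fact (Suc n))"
  proof (induction n)
    case 0
    then show ?case using Lr by simp
  next
    case (Suc n)
    define P where "P = L ^ n / sqrt (fact n)"
    have P: "P \<ge> 0" using L1 by (simp add: P_def)
    have h0: "\<bar>cf A B \<rho> R n\<bar> \<le> P" using Suc by (simp add: P_def)
    have h1: "\<bar>cf A B \<rho> R (Suc n)\<bar> \<le> P * L / sqrt (real n + 1)" using conjunct2[OF Suc.IH] unfolding key P_def .
    have "\<bar>cf A B \<rho> R (Suc (Suc n))\<bar> \<le> P * L^2 / (sqrt (real n + 1) * sqrt (real n + 2))"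
      using cf_step_bound[OF L1 LB LA A refl refl P h0 h1] by simp
    also have "\<dots> = L ^ Suc (Suc n) / sqrt (fact (Suc (Suc n)))"
      unfolding key P_def by (simp add: power2_eq_square field_simps)
    finally show ?case using conjunct2[OF Suc.IH] by simp
  qed
  then show ?thesis by simp
qed

lemma summable_sqfact:
  fixes M :: real
  assumes M: "M \<ge> 0"
  shows "summable (\<lambda>n. real (Suc n) * M ^ n / sqrt (fact n))"
proof (rule summable_ratio_test[where c = "1/2" and N = "nat \<lceil>16 * M^2\<rceil>"])
  fix n assume n: "nat \<lceil>16 * M^2\<rceil> \<le> n"
  have "16 * M^2 \<le> real n" using n by linarith
  then have "(4 * M)^2 < real n + 1" by (simp add: power2_eq_square)
  then have s4: "4 * M < sqrt (real n + 1)"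
    using M real_less_rsqrt by blast
  have sp: "sqrt (real n + 1) > 0" by simp
  have fs: "sqrt (fact (Suc n)) = sqrt (fact n) * sqrt (real n + 1)"
  proof -
    have "(fact (Suc n) :: real) = fact n * (real n + 1)" by (simp add: algebra_simps)
    then show ?thesis by (simp add: real_sqrt_mult)
  qed
  have fpos: "sqrt (fact n) > 0" by simp
  have "real (Suc (Suc n)) * M ^ Suc n / sqrt (fact (Suc n))
        = (real (Suc (Suc n)) * M / (real (Suc n) * sqrt (real n + 1))) * (real (Suc n) * M ^ n / sqrt (fact n))"
    unfolding fs power_Suc using fpos sp by (simp add: field_simps del: of_nat_Suc)
  also have "\<dots> \<le> (1/2) * (real (Suc n) * M ^ n / sqrt (fact n))"
  proof (rule mult_right_mono)
    have "real (Suc (Suc n)) \<le> 2 * real (Suc n)" by simp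
    then have "real (Suc (Suc n)) * M \<le> 2 * real (Suc n) * M" using M by (simp add: mult_right_mono)
    also have "\<dots> \<le> (1/2) * (real (Suc n) * sqrt (real n + 1))"
    proof -
      have "real (Suc n) * (4 * M) \<le> real (Suc n) * sqrt (real n + 1)" using s4 by (intro mult_left_mono) auto
      then show ?thesis by (simp add: field_simps)
    qed
    finally have X: "real (Suc (Suc n)) * M \<le> 1/2 * (real (Suc n) * sqrt (real n + 1))" .
    have pos: "real (Suc n) * sqrt (real n + 1) > 0" using sp by simp
    show "real (Suc (Suc n)) * M / (real (Suc n) * sqrt (real n + 1)) \<le> 1/2"
      by (subst pos_divide_le_eq[OF pos]) (rule X)
  qed (use M in simp)
  finally show "norm (real (Suc (Suc n)) * M ^ Suc n / sqrt (fact (Suc n))) \<le> 1/2 * norm (real (Suc n) * M ^ n / sqrt (fact n))"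
    using M by simp
qed simp

lemma joint_cont:
  fixes g :: "real \<Rightarrow> nat \<Rightarrow> real"
  assumes cont: "\<And>n. continuous_on UNIV (\<lambda>R. g R n)"
    and bnd: "\<And>Rb K. \<exists>M. summable M \<and> (\<forall>n R y. \<bar>R\<bar> \<le> Rb \<longrightarrow> \<bar>y\<bar> \<le> K \<longrightarrow> \<bar>g R n * y^n\<bar> \<le> M n)"
  shows "continuous_on UNIV (\<lambda>p. \<Sum>n. g (fst p) n * (snd p)^n)"
proof -
  have "isCont (\<lambda>p. \<Sum>n. g (fst p) n * (snd p)^n) p0" for p0 :: "real \<times> real"
  proof -
    define Rb where "Rb = \<bar>fst p0\<bar> + 1"
    define K where "K = \<bar>snd p0\<bar> + 1"
    define S where "S = {p :: real \<times> real. \<bar>fst p\<bar> \<le> Rb \<and> \<bar>snd p\<bar> \<le> K}"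
    obtain M where M: "summable M" "\<And>n R y. \<bar>R\<bar> \<le> Rb \<Longrightarrow> \<bar>y\<bar> \<le> K \<Longrightarrow> \<bar>g R n * y^n\<bar> \<le> M n"
      using bnd[of Rb K] by blast
    have ul: "uniform_limit S (\<lambda>N p. \<Sum>i<N. g (fst p) i * (snd p)^i) (\<lambda>p. \<Sum>i. g (fst p) i * (snd p)^i) sequentially"
      by (rule Weierstrass_m_test[OF _ M(1)]) (use M(2) in \<open>auto simp: S_def\<close>)
    have "continuous_on S (\<lambda>p. \<Sum>i<N. g (fst p) i * (snd p)^i)" for N
    proof -
      have "continuous_on S (\<lambda>p. g (fst p) i)" for i
        by (rule continuous_on_compose2[OF cont[of i]]) (auto intro: continuous_intros)
      then show ?thesis by (intro continuous_intros) auto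
    qed
    then have cS: "continuous_on S (\<lambda>p. \<Sum>i. g (fst p) i * (snd p)^i)"
      by (intro uniform_limit_theorem[OF _ ul]) auto
    have op: "open {p :: real \<times> real. \<bar>fst p\<bar> < Rb \<and> \<bar>snd p\<bar> < K}"
      by (intro open_Collect_conj open_Collect_less continuous_intros)
    have "p0 \<in> interior S"
      by (rule interiorI[OF op]) (auto simp: S_def Rb_def K_def)
    then show ?thesis using continuous_on_interior[OF cS] by blast
  qed
  then show ?thesis by (simp add: continuous_on_eq_continuous_at)
qed

lemma cont_cf: "continuous_on UNIV (\<lambda>R. cf A B \<rho> R n)"
proof -
  have "continuous_on UNIV (\<lambda>R. cf A B \<rho> R n) \<and> continuous_on UNIV (\<lambda>R. cf A B \<rho> R (Suc n))"
  proof (induction n)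
    case 0 then show ?case by (simp add: continuous_on_const)
  next
    case (Suc n)
    then show ?case by (simp del: of_nat_Suc) (intro continuous_intros; simp)
  qed
  then show ?thesis by simp
qed

locale ode =
  fixes A B \<rho> :: real
  assumes Apos: "A > 0"
begin

definition F :: "real \<Rightarrow> real \<Rightarrow> real" where
  "F R y = (\<Sum>n. cf A B \<rho> R n * y^n)"
definition F1 :: "real \<Rightarrow> real \<Rightarrow> real" where
  "F1 R y = (\<Sum>n. diffs (cf A B \<rho> R) n * y^n)"
definition F2 :: "real \<Rightarrow> real \<Rightarrow> real" where
  "F2 R y = (\<Sum>n. diffs (diffs (cf A B \<rho> R)) n * y^n)"

lemma bound_box:
  fixes Rb K :: real
  defines "L \<equiv> 1 + \<bar>\<rho>\<bar> + 2 * \<bar>B\<bar> + 2 * (A + Rb)"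
  assumes "\<bar>R\<bar> \<le> Rb" "\<bar>y\<bar> \<le> K"
  shows "\<bar>cf A B \<rho> R n * y^n\<bar> \<le> real (Suc n) * (L * K) ^ n / sqrt (fact n)"
    and "\<bar>diffs (cf A B \<rho> R) n * y^n\<bar> \<le> L * (real (Suc n) * (L * K) ^ n / sqrt (fact n))"
proof -
  have L1: "L \<ge> 1" using assms Apos by (simp add: L_def)
  have b: "\<bar>cf A B \<rho> R m\<bar> \<le> L ^ m / sqrt (fact m)" for m
    unfolding L_def by (rule cf_bound) (use Apos assms in auto)
  have yK: "\<bar>y\<bar>^n \<le> K^n" using assms by (simp add: power_mono)
  have "\<bar>cf A B \<rho> R n * y^n\<bar> \<le> (L ^ n / sqrt (fact n)) * K^n"
    unfolding abs_mult power_abs by (rule mult_mono[OF b yK]) (use L1 in auto)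
  also have "\<dots> = (L * K) ^ n / sqrt (fact n)" by (simp add: power_mult_distrib)
  also have "\<dots> \<le> real (Suc n) * ((L * K) ^ n / sqrt (fact n))"
  proof -
    have "K \<ge> 0" using assms by linarith
    then have "0 \<le> (L * K) ^ n / sqrt (fact n)" using L1 by simp
    then show ?thesis using mult_right_mono[of 1 "real (Suc n)" "(L * K) ^ n / sqrt (fact n)"] by simp
  qed
  also have "\<dots> = real (Suc n) * (L * K) ^ n / sqrt (fact n)" by simp
  finally show "\<bar>cf A B \<rho> R n * y^n\<bar> \<le> real (Suc n) * (L * K) ^ n / sqrt (fact n)" .
  have sf: "sqrt (fact n) \<le> sqrt (fact (Suc n))" by simp
  have "\<bar>diffs (cf A B \<rho> R) n * y^n\<bar> = real (Suc n) * \<bar>cf A B \<rho> R (Suc n)\<bar> * \<bar>y\<bar>^n"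
    by (simp add: diffs_def abs_mult power_abs)
  also have "\<dots> \<le> real (Suc n) * (L ^ Suc n / sqrt (fact (Suc n))) * K^n"
    by (intro mult_mono mult_left_mono b yK) (use L1 in auto)
  also have "\<dots> \<le> real (Suc n) * (L ^ Suc n / sqrt (fact n)) * K^n"
    using L1 assms by (intro mult_right_mono mult_left_mono divide_left_mono sf) auto
  also have "\<dots> = L * (real (Suc n) * (L * K) ^ n / sqrt (fact n))"
    by (simp add: power_mult_distrib)
  finally show "\<bar>diffs (cf A B \<rho> R) n * y^n\<bar> \<le> L * (real (Suc n) * (L * K) ^ n / sqrt (fact n))" .
qed

lemma summable_F: "summable (\<lambda>n. cf A B \<rho> R n * y^n)"
proof (rule summable_comparison_test)
  define L where "L = 1 + \<bar>\<rho>\<bar> + 2 * \<bar>B\<bar> + 2 * (A + \<bar>R\<bar>)"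
  have L1: "L \<ge> 1" using Apos by (simp add: L_def)
  show "\<exists>N. \<forall>n\<ge>N. norm (cf A B \<rho> R n * y^n) \<le> real (Suc n) * (L * \<bar>y\<bar>) ^ n / sqrt (fact n)"
    using bound_box(1)[of R "\<bar>R\<bar>" y "\<bar>y\<bar>"] by (auto simp: L_def)
  show "summable (\<lambda>n. real (Suc n) * (L * \<bar>y\<bar>) ^ n / sqrt (fact n))"
    by (rule summable_sqfact) (use L1 in simp)
qed

lemma summable_F1: "summable (\<lambda>n. diffs (cf A B \<rho> R) n * y^n)"
  by (rule termdiff_converges_all) (rule summable_F)

lemma summable_F2: "summable (\<lambda>n. diffs (diffs (cf A B \<rho> R)) n * y^n)"
  by (rule termdiff_converges_all) (rule summable_F1)

lemma F_deriv: "(F R has_real_derivative F1 R y) (at y)"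
  unfolding F_def[abs_def] F1_def
  by (rule termdiffs_strong_converges_everywhere) (rule summable_F)

lemma F1_deriv: "(F1 R has_real_derivative F2 R y) (at y)"
  unfolding F1_def[abs_def] F2_def
  by (rule termdiffs_strong_converges_everywhere) (rule summable_F1)

lemma F_0: "F R 0 = 1"
proof -
  have "(\<lambda>n. cf A B \<rho> R n * 0^n) sums (cf A B \<rho> R 0)"
    using powser_sums_zero[of "cf A B \<rho> R"] by simp
  then show ?thesis unfolding F_def by (simp add: sums_iff)
qed

lemma F1_0: "F1 R 0 = \<rho>"
proof -
  have "(\<lambda>n. diffs (cf A B \<rho> R) n * 0^n) sums (diffs (cf A B \<rho> R) 0)"
    using powser_sums_zero[of "diffs (cf A B \<rho> R)"] by simp
  then show ?thesis unfolding F1_def by (simp add: sums_iff diffs_def)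
qed

lemma F_ode: "F2 R y = (A * y + B) * F1 R y - R * F R y"
proof -
  let ?c = "cf A B \<rho> R"
  have s0: "(\<lambda>n. ?c n * y^n) sums F R y" unfolding F_def using summable_F by (rule summable_sums)
  have s1: "(\<lambda>n. diffs ?c n * y^n) sums F1 R y" unfolding F1_def using summable_F1 by (rule summable_sums)
  have s2: "(\<lambda>n. diffs (diffs ?c) n * y^n) sums F2 R y" unfolding F2_def using summable_F2 by (rule summable_sums)
  have "(\<lambda>n. y * (diffs ?c n * y^n)) sums (y * F1 R y)" by (rule sums_mult[OF s1])
  then have "(\<lambda>n. (\<lambda>m. real m * ?c m * y^m) (Suc n)) sums (y * F1 R y)"
    by (simp add: diffs_def algebra_simps)
  then have s3: "(\<lambda>m. real m * ?c m * y^m) sums (y * F1 R y)"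
    by (subst (asm) sums_Suc_iff) simp
  have "(\<lambda>n. B * (diffs ?c n * y^n) + A * (real n * ?c n * y^n) - R * (?c n * y^n)) sums
          (B * F1 R y + A * (y * F1 R y) - R * F R y)"
    by (intro sums_add sums_diff sums_mult s0 s1 s3)
  moreover have "B * (diffs ?c n * y^n) + A * (real n * ?c n * y^n) - R * (?c n * y^n) = diffs (diffs ?c) n * y^n" for n
  proof -
    have "diffs (diffs ?c) n = real (Suc n) * real (Suc (Suc n)) * ?c (Suc (Suc n))"
      by (simp add: diffs_def)
    also have "\<dots> = B * real (Suc n) * ?c (Suc n) + (A * real n - R) * ?c n"
    proof -
      have nz: "real (Suc n) * real (Suc (Suc n)) \<noteq> 0" by (simp del: of_nat_Suc)
      show ?thesis unfolding cf.simps(3) using nz by simp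
    qed
    finally have E: "diffs (diffs ?c) n = B * real (Suc n) * ?c (Suc n) + (A * real n - R) * ?c n" .
    show ?thesis unfolding E by (simp add: diffs_def algebra_simps)
  qed
  ultimately have "(\<lambda>n. diffs (diffs ?c) n * y^n) sums (B * F1 R y + A * (y * F1 R y) - R * F R y)" by simp
  then show ?thesis using s2 sums_unique2 by (fastforce simp: algebra_simps)
qed

lemma F_cont: "continuous_on UNIV (\<lambda>p. F (fst p) (snd p))"
  unfolding F_def
proof (rule joint_cont[OF cont_cf])
  fix Rb K :: real
  define L where "L = 1 + \<bar>\<rho>\<bar> + 2 * \<bar>B\<bar> + 2 * (A + \<bar>Rb\<bar>)"
  have L1: "L \<ge> 1" using Apos by (simp add: L_def)
  show "\<exists>M. summable M \<and> (\<forall>n R y. \<bar>R\<bar> \<le> Rb \<longrightarrow> \<bar>y\<bar> \<le> K \<longrightarrow> \<bar>cf A B \<rho> R n * y ^ n\<bar> \<le> M n)"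
  proof (intro exI conjI allI impI)
    show "summable (\<lambda>n. real (Suc n) * (L * \<bar>K\<bar>) ^ n / sqrt (fact n))"
      by (rule summable_sqfact) (use L1 in simp)
    fix n R y assume "\<bar>R\<bar> \<le> Rb" "\<bar>y\<bar> \<le> K"
    then show "\<bar>cf A B \<rho> R n * y ^ n\<bar> \<le> real (Suc n) * (L * \<bar>K\<bar>) ^ n / sqrt (fact n)"
      using bound_box(1)[of R "\<bar>Rb\<bar>" y "\<bar>K\<bar>" n] by (auto simp: L_def)
  qed
qed

lemma F1_cont: "continuous_on UNIV (\<lambda>p. F1 (fst p) (snd p))"
  unfolding F1_def
proof (rule joint_cont)
  show "continuous_on UNIV (\<lambda>R. diffs (cf A B \<rho> R) n)" for n
    unfolding diffs_def by (intro continuous_intros cont_cf)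
  fix Rb K :: real
  define L where "L = 1 + \<bar>\<rho>\<bar> + 2 * \<bar>B\<bar> + 2 * (A + \<bar>Rb\<bar>)"
  have L1: "L \<ge> 1" using Apos by (simp add: L_def)
  show "\<exists>M. summable M \<and> (\<forall>n R y. \<bar>R\<bar> \<le> Rb \<longrightarrow> \<bar>y\<bar> \<le> K \<longrightarrow> \<bar>diffs (cf A B \<rho> R) n * y ^ n\<bar> \<le> M n)"
  proof (intro exI conjI allI impI)
    show "summable (\<lambda>n. L * (real (Suc n) * (L * \<bar>K\<bar>) ^ n / sqrt (fact n)))"
      by (intro summable_mult summable_sqfact) (use L1 in simp)
    fix n R y assume "\<bar>R\<bar> \<le> Rb" "\<bar>y\<bar> \<le> K"
    then show "\<bar>diffs (cf A B \<rho> R) n * y ^ n\<bar> \<le> L * (real (Suc n) * (L * \<bar>K\<bar>) ^ n / sqrt (fact n))"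
      using bound_box(2)[of R "\<bar>Rb\<bar>" y "\<bar>K\<bar>" n] by (auto simp: L_def)
  qed
qed

end



lemma first_cross:
  fixes g g' :: "real \<Rightarrow> real"
  assumes der: "\<And>y. y \<ge> a \<Longrightarrow> (g has_real_derivative g' y) (at y)"
    and start: "g a < 0"
    and cross: "\<And>c. c > a \<Longrightarrow> g c = 0 \<Longrightarrow> (\<forall>t\<in>{a..<c}. g t < 0) \<Longrightarrow> g' c < 0"
    and b: "b \<ge> a"
  shows "g b < 0"
proof (rule ccontr)
  assume nb: "\<not> g b < 0"
  define S where "S = {x. a \<le> x \<and> x \<le> b \<and> g x \<ge> 0}"
  have cont: "continuous_on {a..b} g"
    using der by (intro DERIV_continuous_on) (auto intro: has_field_derivative_at_within)
  have Seq: "S = {a..b} \<inter> g -` {0..}" by (auto simp: S_def)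
  have clS: "closed S" unfolding Seq by (intro continuous_closed_preimage cont) auto
  have bS: "b \<in> S" using nb b by (auto simp: S_def)
  have bdd: "bdd_below S" by (auto simp: S_def bdd_below_def)
  define c where "c = Inf S"
  have cS: "c \<in> S" unfolding c_def using closed_contains_Inf[OF _ bdd clS] bS by blast
  have below: "g t < 0" if "a \<le> t" "t < c" for t
  proof (rule ccontr)
    assume "\<not> g t < 0"
    then have "t \<in> S" using that cS by (auto simp: S_def)
    then have "c \<le> t" unfolding c_def by (rule cInf_lower[OF _ bdd])
    then show False using that by simp
  qed
  have ca: "c > a"
  proof -
    have "c \<ge> a" using cS by (simp add: S_def)
    moreover have "c \<noteq> a" using cS start by (auto simp: S_def)
    ultimately show ?thesis by simp
  qed
  have gc0: "g c = 0"
  proof (rule ccontr)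
    assume "g c \<noteq> 0"
    then have "g c > 0" using cS by (simp add: S_def)
    have "continuous_on {a..c} g" by (rule continuous_on_subset[OF cont]) (use cS in \<open>auto simp: S_def\<close>)
    then obtain x where x: "a \<le> x" "x \<le> c" "g x = 0"
      using IVT'[of g a 0 c] start \<open>g c > 0\<close> ca by auto
    then have "x < c" using \<open>g c > 0\<close> by (cases "x = c") auto
    then show False using below[OF x(1)] x(3) by simp
  qed
  have "g' c < 0" using cross[OF ca gc0] below by auto
  then obtain d where d: "d > 0" "\<And>h. h > 0 \<Longrightarrow> h < d \<Longrightarrow> g c < g (c - h)"
    using DERIV_neg_dec_left[OF der[of c]] ca by force
  define h where "h = min d (c - a) / 2"
  have h: "h > 0" "h < d" "h \<le> c - a" using d ca by (auto simp: h_def)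
  have "g (c - h) < 0" using below[of "c - h"] h by simp
  moreover have "g c < g (c - h)" using d(2)[OF h(1,2)] .
  ultimately show False using gc0 by simp
qed

lemma stay_neg:
  fixes g g' :: "real \<Rightarrow> real"
  assumes der: "\<And>y. y \<ge> a \<Longrightarrow> (g has_real_derivative g' y) (at y)"
    and start: "g a \<le> 0"
    and cross: "\<And>c. c \<ge> a \<Longrightarrow> g c = 0 \<Longrightarrow> g' c < 0"
    and b: "b > a"
  shows "g b < 0"
proof (cases "g a < 0")
  case True
  show ?thesis by (rule first_cross[OF der True]) (use cross b in auto)
next
  case False
  then have ga: "g a = 0" using start by simp
  obtain d where d: "d > 0" "\<And>h. h > 0 \<Longrightarrow> h < d \<Longrightarrow> g a > g (a + h)"
    using DERIV_neg_dec_right[OF der[of a] cross[OF _ ga]] by force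
  define h where "h = min d (b - a) / 2"
  have h: "h > 0" "h < d" "h < b - a" using d b by (auto simp: h_def)
  have gh: "g (a + h) < 0" using d(2)[OF h(1,2)] ga by simp
  show ?thesis by (rule first_cross[OF der gh]) (use cross h in auto)
qed

lemma energy_ineq:
  fixes p q s R T :: real
  assumes "\<bar>s\<bar> \<le> T"
  shows "2 * p * q + 2 * q * (s * q - R * p) + (1 + \<bar>R\<bar> + 2 * T) * (p^2 + q^2) \<ge> 0"
proof -
  have e1: "2 * p * q + (p^2 + q^2) \<ge> 0"
    using zero_le_power2[of "p + q"] by (simp add: power2_eq_square algebra_simps)
  have pq: "2 * \<bar>p\<bar> * \<bar>q\<bar> \<le> p^2 + q^2"
    using zero_le_power2[of "\<bar>p\<bar> - \<bar>q\<bar>"] by (simp add: power2_eq_square algebra_simps)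
  have "\<bar>2 * R * p * q\<bar> = \<bar>R\<bar> * (2 * \<bar>p\<bar> * \<bar>q\<bar>)" by (simp add: abs_mult)
  also have "\<dots> \<le> \<bar>R\<bar> * (p^2 + q^2)" by (rule mult_left_mono[OF pq]) simp
  finally have e2: "- 2 * R * p * q + \<bar>R\<bar> * (p^2 + q^2) \<ge> 0" by linarith
  have T0: "T \<ge> 0" using assms by simp
  have "s * q^2 \<ge> - T * q^2" using assms by (intro mult_right_mono) auto
  moreover have "T * p^2 \<ge> 0" using T0 by simp
  ultimately have e3: "2 * s * q^2 + 2 * T * (p^2 + q^2) \<ge> 0" by (simp add: algebra_simps)
  have "2 * p * q + 2 * q * (s * q - R * p) + (1 + \<bar>R\<bar> + 2 * T) * (p^2 + q^2)
      = (2 * p * q + (p^2 + q^2)) + (- 2 * R * p * q + \<bar>R\<bar> * (p^2 + q^2)) + (2 * s * q^2 + 2 * T * (p^2 + q^2))"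
    by (simp add: power2_eq_square algebra_simps)
  then show ?thesis using e1 e2 e3 by linarith
qed

context ode begin

lemma F_pos_of_nonneg:
  assumes nn: "\<And>y. y \<ge> 0 \<Longrightarrow> F R y \<ge> 0" and y: "y \<ge> 0"
  shows "F R y > 0"
proof (rule ccontr)
  assume "\<not> F R y > 0"
  then have Fz: "F R y = 0" using nn[OF y] by simp
  have z: "y > 0" using Fz F_0[of R] y by (cases "y = 0") auto
  have F1z: "F1 R y = 0"
  proof (rule DERIV_local_min[OF F_deriv, of y])
    show "0 < y" by (rule z)
    show "\<forall>t. \<bar>y - t\<bar> < y \<longrightarrow> F R y \<le> F R t"
      using nn Fz by auto
  qed
  define T where "T = A * y + \<bar>B\<bar>"
  define C where "C = 1 + \<bar>R\<bar> + 2 * T"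
  define G where "G = (\<lambda>t. ((F R t)^2 + (F1 R t)^2) * exp (C * t))"
  have Gd: "(G has_real_derivative
      (2 * F R t * F1 R t + 2 * F1 R t * F2 R t + C * ((F R t)^2 + (F1 R t)^2)) * exp (C * t)) (at t)" for t
    unfolding G_def
    by (rule derivative_eq_intros F_deriv F1_deriv refl | simp)+ (simp add: algebra_simps)
  have "G 0 \<le> G y"
  proof (rule DERIV_nonneg_imp_nondecreasing[of 0 y])
    fix t assume t: "0 \<le> t" "t \<le> y"
    have sT: "\<bar>A * t + B\<bar> \<le> T"
    proof -
      have "\<bar>A * t\<bar> \<le> A * y" using t Apos by (simp add: abs_mult mult_left_mono)
      then show ?thesis unfolding T_def by linarith
    qed
    have "2 * F R t * F1 R t + 2 * F1 R t * F2 R t + C * ((F R t)^2 + (F1 R t)^2) \<ge> 0"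
      unfolding F_ode C_def using energy_ineq[OF sT, of "F R t" "F1 R t" R] by (simp add: algebra_simps)
    then have "0 \<le> (2 * F R t * F1 R t + 2 * F1 R t * F2 R t + C * ((F R t)^2 + (F1 R t)^2)) * exp (C * t)"
      by simp
    then show "\<exists>d. (G has_real_derivative d) (at t) \<and> d \<ge> 0"
      using Gd by blast
  qed (use y in auto)
  moreover have "G y = 0" using Fz F1z by (simp add: G_def)
  moreover have "G 0 > 0" using F_0 by (simp add: G_def add_pos_nonneg)
  ultimately show False by simp
qed

lemma sturm:
  assumes R: "R \<ge> ((A + \<bar>B\<bar>)/2)^2 + pi^2"
  shows "\<exists>y\<in>{0..1}. F R y \<le> 0"
proof (rule ccontr)
  assume "\<not> (\<exists>y\<in>{0..1}. F R y \<le> 0)"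
  then have pos: "\<And>y. 0 \<le> y \<Longrightarrow> y \<le> 1 \<Longrightarrow> F R y > 0" by force
  define L where "L = (\<lambda>y::real. (A * y + B) / 2)"
  define \<psi> where "\<psi> = (\<lambda>y::real. A * y^2 / 4 + B * y / 2)"
  define \<Psi> where "\<Psi> = (\<lambda>y. exp (- \<psi> y) * (sin (pi * y) * (F1 R y - L y * F R y) - pi * cos (pi * y) * F R y))"
  have d: "(\<Psi> has_real_derivative
        exp (- \<psi> y) * sin (pi * y) * F R y * (pi^2 - (R + A/2 - (L y)^2))) (at y)" for y
  proof -
    have "(\<Psi> has_real_derivative
        exp (- \<psi> y) * (- ((A * (2 * y) / 4 + B / 2))) * (sin (pi * y) * (F1 R y - L y * F R y) - pi * cos (pi * y) * F R y)
        + exp (- \<psi> y) * ((cos (pi * y) * pi) * (F1 R y - L y * F R y) + sin (pi * y) * (F2 R y - (A / 2 * F R y + L y * F1 R y))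
             - pi * ((- sin (pi * y) * pi) * F R y + cos (pi * y) * F1 R y))) (at y)"
      unfolding \<Psi>_def \<psi>_def L_def
      by (rule derivative_eq_intros F_deriv F1_deriv refl | simp)+ (simp add: algebra_simps)
    moreover have "exp (- \<psi> y) * (- ((A * (2 * y) / 4 + B / 2))) * (sin (pi * y) * (F1 R y - L y * F R y) - pi * cos (pi * y) * F R y)
        + exp (- \<psi> y) * ((cos (pi * y) * pi) * (F1 R y - L y * F R y) + sin (pi * y) * (F2 R y - (A / 2 * F R y + L y * F1 R y))
             - pi * ((- sin (pi * y) * pi) * F R y + cos (pi * y) * F1 R y))
        = exp (- \<psi> y) * sin (pi * y) * F R y * (pi^2 - (R + A/2 - (L y)^2))"
      unfolding F_ode L_def by (simp add: field_simps power2_eq_square)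
    ultimately show ?thesis by simp
  qed
  have "\<Psi> 1 \<le> \<Psi> 0"
  proof (rule DERIV_nonpos_imp_nonincreasing[of 0 1])
    fix y :: real assume y: "0 \<le> y" "y \<le> 1"
    have Lb: "(L y)^2 \<le> ((A + \<bar>B\<bar>)/2)^2"
    proof -
      have "\<bar>A * y + B\<bar> \<le> A + \<bar>B\<bar>"
      proof -
        have "\<bar>A * y\<bar> \<le> A" using y Apos by (simp add: abs_mult mult_left_le)
        then show ?thesis by linarith
      qed
      then have "\<bar>L y\<bar> \<le> (A + \<bar>B\<bar>)/2" by (simp add: L_def)
      then show ?thesis by (metis abs_ge_zero power2_abs power_mono)
    qed
    have neg: "pi^2 - (R + A/2 - (L y)^2) \<le> 0" using R Lb Apos by linarith
    have "sin (pi * y) \<ge> 0" using y by (intro sin_ge_zero) auto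
    then have "exp (- \<psi> y) * sin (pi * y) * F R y \<ge> 0" using pos[OF y] by simp
    then have "exp (- \<psi> y) * sin (pi * y) * F R y * (pi^2 - (R + A/2 - (L y)^2)) \<le> 0"
      using neg by (simp add: mult_nonneg_nonpos)
    then show "\<exists>d. (\<Psi> has_real_derivative d) (at y) \<and> d \<le> 0" using d by blast
  qed simp
  moreover have "\<Psi> 0 = - pi" by (simp add: \<Psi>_def \<psi>_def F_0)
  moreover have "\<Psi> 1 > 0" using pos[of 1] by (simp add: \<Psi>_def)
  ultimately show False using pi_gt_zero by linarith
qed

end



context ode begin

definition Lf :: "real \<Rightarrow> real" where "Lf y = (A * y + B) / 2"
definition w :: "real \<Rightarrow> real \<Rightarrow> real" where "w R y = F1 R y / F R y"
definition wd :: "real \<Rightarrow> real \<Rightarrow> real" where "wd R y = (A * y + B) * w R y - R - (w R y)^2"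
definition Dset :: "real set" where
  "Dset = {R. \<exists>y1\<ge>0. Lf y1 > 0 \<and> (Lf y1)^2 > R + A/2 \<and> (\<forall>t\<in>{0..y1}. F R t > 0) \<and> F1 R y1 > Lf y1 * F R y1}"
definition Nset :: "real set" where
  "Nset = {R. \<exists>y\<ge>0. F R y < 0}"

lemma w_deriv:
  assumes "F R y \<noteq> 0"
  shows "(w R has_real_derivative wd R y) (at y)"
proof -
  have "(w R has_real_derivative (F2 R y * F R y - F1 R y * F1 R y) / (F R y * F R y)) (at y)"
    unfolding w_def[abs_def]
    by (rule derivative_eq_intros F_deriv F1_deriv refl assms | simp)+
  moreover have "(F2 R y * F R y - F1 R y * F1 R y) / (F R y * F R y) = wd R y"
    unfolding wd_def w_def F_ode using assms by (simp add: field_simps power2_eq_square)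
  ultimately show ?thesis by simp
qed

lemma wd_deriv:
  assumes "F R y \<noteq> 0"
  shows "(wd R has_real_derivative (A * w R y + (A * y + B) * wd R y - 2 * w R y * wd R y)) (at y)"
proof -
  have wd': "(w R has_real_derivative wd R y) (at y)" by (rule w_deriv[OF assms])
  have "(wd R has_real_derivative (A * w R y + (A * y + B) * wd R y - 2 * w R y * wd R y)) (at y)"
    unfolding wd_def[abs_def]
    by (rule derivative_eq_intros wd' refl | simp)+ (simp add: wd_def algebra_simps)
  then show ?thesis .
qed

lemma F_contR: "continuous_on UNIV (\<lambda>R. F R y)"
proof -
  have "continuous_on UNIV ((\<lambda>p. F (fst p) (snd p)) \<circ> (\<lambda>R. (R, y)))"
    by (rule continuous_on_compose[OF _ continuous_on_subset[OF F_cont]]) (auto intro: continuous_intros)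
  then show ?thesis by (simp add: o_def)
qed

lemma F1_contR: "continuous_on UNIV (\<lambda>R. F1 R y)"
proof -
  have "continuous_on UNIV ((\<lambda>p. F1 (fst p) (snd p)) \<circ> (\<lambda>R. (R, y)))"
    by (rule continuous_on_compose[OF _ continuous_on_subset[OF F1_cont]]) (auto intro: continuous_intros)
  then show ?thesis by (simp add: o_def)
qed

lemma open_Nset: "open Nset"
proof -
  have "Nset = (\<Union>y\<in>{0..}. {R. F R y < 0})" by (auto simp: Nset_def)
  moreover have "open {R. F R y < 0}" for y
    by (intro open_Collect_less F_contR continuous_intros)
  ultimately show ?thesis by auto
qed

lemma open_pos: "open {R. \<forall>t\<in>{0..y1}. F R t > 0}"
proof -
  define S where "S = (UNIV \<times> {0..y1}) \<inter> {p. F (fst p) (snd p) \<le> 0}"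
  have "closed {p. F (fst p) (snd p) \<le> (0::real)}"
    by (intro closed_Collect_le F_cont continuous_intros)
  then have "closedin (top_of_set (UNIV \<times> {0..y1})) S"
    unfolding S_def by (intro closedin_closed_Int)
  then have "closedin (top_of_set UNIV) (fst ` S)"
    using Starlike.closed_map_fst[of "{0..y1}" UNIV S] by auto
  then have cl: "closed (fst ` S)" by simp
  have "{R. \<forall>t\<in>{0..y1}. F R t > 0} = - (fst ` S)"
    by (force simp: S_def not_less)
  then show ?thesis using cl by (simp add: open_Compl)
qed

lemma open_Dset: "open Dset"
proof -
  have "Dset = (\<Union>y1\<in>{y1. y1 \<ge> 0 \<and> Lf y1 > 0}.
     {R. R + A/2 < (Lf y1)^2} \<inter> {R. \<forall>t\<in>{0..y1}. F R t > 0} \<inter> {R. Lf y1 * F R y1 < F1 R y1})"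
    by (auto simp: Dset_def)
  moreover have "open {R. R + A/2 < (Lf y1)^2}" for y1
    by (intro open_Collect_less continuous_intros)
  moreover have "open {R. Lf y1 * F R y1 < F1 R y1}" for y1
    by (intro open_Collect_less F_contR F1_contR continuous_intros)
  ultimately show ?thesis using open_pos by (auto intro!: open_Int)
qed

lemma notD_le:
  assumes Fpos: "\<And>y. y \<ge> 0 \<Longrightarrow> F R y > 0" and nD: "R \<notin> Dset"
    and y: "y \<ge> 0" "Lf y > 0" "(Lf y)^2 > R + A/2"
  shows "w R y \<le> Lf y"
proof (rule ccontr)
  assume "\<not> w R y \<le> Lf y"
  then have "F1 R y > Lf y * F R y" using Fpos[OF y(1)] by (simp add: w_def field_simps)
  then have "R \<in> Dset" unfolding Dset_def using y Fpos by auto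
  then show False using nD by simp
qed

lemma noD_contra:
  assumes Fpos: "\<And>y. y \<ge> 0 \<Longrightarrow> F R y > 0" and nD: "R \<notin> Dset"
    and y1: "y1 \<ge> 0" and w1: "w R y1 > 0" and wd1: "wd R y1 > 0"
  shows False
proof -
  have Fnz: "y \<ge> y1 \<Longrightarrow> F R y \<noteq> 0" for y using Fpos[of y] y1 by simp
  have wmono: "w R a \<le> w R b" if "y1 \<le> a" "a \<le> b" "\<And>t. a \<le> t \<Longrightarrow> t \<le> b \<Longrightarrow> wd R t \<ge> 0" for a b
  proof (rule DERIV_nonneg_imp_nondecreasing[OF that(2)])
    fix t assume t: "a \<le> t" "t \<le> b"
    have "(w R has_real_derivative wd R t) (at t)" by (rule w_deriv[OF Fnz]) (use t that in simp)
    moreover have "wd R t \<ge> 0" using that(3) t by simp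
    ultimately show "\<exists>d. (w R has_real_derivative d) (at t) \<and> 0 \<le> d" by blast
  qed
  have wdpos: "wd R y > 0" if "y \<ge> y1" for y
  proof -
    have "- wd R y < 0"
    proof (rule first_cross[where g = "\<lambda>y. - wd R y" and a = y1])
      show "((\<lambda>y. - wd R y) has_real_derivative - (A * w R t + (A * t + B) * wd R t - 2 * w R t * wd R t)) (at t)"
        if "t \<ge> y1" for t
        using wd_deriv[OF Fnz[OF that]] by (intro derivative_intros)
      show "- wd R y1 < 0" using wd1 by simp
      fix c assume c: "c > y1" "- wd R c = 0" "\<forall>t\<in>{y1..<c}. - wd R t < 0"
      have "w R y1 \<le> w R c"
        by (rule wmono) (use c in \<open>auto simp: le_less\<close>)
      then have "w R c > 0" using w1 by simp
      then show "- (A * w R c + (A * c + B) * wd R c - 2 * w R c * wd R c) < 0"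
        using c(2) Apos by simp
    qed (use that in simp)
    then show ?thesis by simp
  qed
  have wge: "w R y \<ge> w R y1" if "y \<ge> y1" for y
    by (rule wmono) (use that wdpos in \<open>auto simp: less_imp_le\<close>)
  define c0 where "c0 = w R y1"
  have c0: "c0 > 0" using w1 by (simp add: c0_def)
  define K where "K = R + A/2 + 1"
  define M where "M = max (max 1 K) (K / c0)"
  define Y where "Y = max y1 ((2 * M - B) / A)"
  have Y: "Y \<ge> y1" "Y \<ge> 0" using y1 by (auto simp: Y_def)
  have LM: "Lf y \<ge> M" if "y \<ge> Y" for y
  proof -
    have "y \<ge> (2 * M - B) / A" using that by (simp add: Y_def)
    then have "A * y \<ge> 2 * M - B" using Apos by (simp add: divide_le_eq mult.commute)
    then show ?thesis by (simp add: Lf_def)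
  qed
  define h where "h = (\<lambda>y. w R y - Lf y - y)"
  have hmono: "h Y \<le> h y" if "y \<ge> Y" for y
  proof (rule DERIV_nonneg_imp_nondecreasing[OF that])
    fix t assume t: "Y \<le> t" "t \<le> y"
    have Ft: "F R t \<noteq> 0" using Fnz t Y by simp
    have hd: "(h has_real_derivative wd R t - A/2 - 1) (at t)"
      unfolding h_def Lf_def[abs_def]
      by (rule derivative_eq_intros w_deriv[OF Ft] refl | simp)+
    have L1: "Lf t \<ge> 1" and LK: "Lf t \<ge> K" and Lc: "Lf t \<ge> K / c0" using LM[of t] t by (auto simp: M_def)
    have Lpos: "Lf t > 0" using L1 by simp
    have "(Lf t)^2 \<ge> Lf t" using L1 by (simp add: power2_eq_square)
    then have Lsq: "(Lf t)^2 > R + A/2" using LK by (simp add: K_def)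
    have wle: "w R t \<le> Lf t" by (rule notD_le[OF Fpos nD]) (use t Y Lpos Lsq in auto)
    have wge': "w R t \<ge> c0" unfolding c0_def by (rule wge) (use t Y in simp)
    have "c0 * Lf t \<ge> K" using Lc c0 by (simp add: divide_le_eq mult.commute)
    also have "c0 * Lf t \<le> w R t * (2 * Lf t - w R t)"
      by (rule mult_mono) (use wge' wle c0 Lpos in auto)
    finally have "w R t * (2 * Lf t - w R t) \<ge> K" .
    then have "wd R t \<ge> A/2 + 1"
      unfolding wd_def K_def Lf_def by (simp add: power2_eq_square algebra_simps)
    then have "0 \<le> wd R t - A/2 - 1" by simp
    then show "\<exists>d. (h has_real_derivative d) (at t) \<and> 0 \<le> d" using hd by blast
  qed
  define y where "y = Y + \<bar>h Y\<bar> + 1"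
  have yY: "y \<ge> Y" by (simp add: y_def)
  have "h y \<ge> h Y" by (rule hmono[OF yY])
  moreover have "h y = w R y - Lf y - y" by (simp add: h_def)
  moreover have "- h Y \<le> \<bar>h Y\<bar>" by simp
  ultimately have "w R y - Lf y \<ge> 1" using Y(2) unfolding y_def by linarith
  moreover have "w R y \<le> Lf y"
  proof -
    have L1: "Lf y \<ge> 1" and LK: "Lf y \<ge> K" using LM[OF yY] by (auto simp: M_def)
    have "(Lf y)^2 \<ge> Lf y" using L1 by (simp add: power2_eq_square)
    then have Lsq: "(Lf y)^2 > R + A/2" using LK by (simp add: K_def)
    show ?thesis by (rule notD_le[OF Fpos nD]) (use yY Y L1 Lsq in auto)
  qed
  ultimately show False by simp
qed

lemma D_zero:
  assumes \<rho>pos: "\<rho> > 0"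
  shows "0 \<in> Dset"
proof (rule ccontr)
  assume nD: "0 \<notin> Dset"
  define E where "E = (\<lambda>y::real. F1 0 y * exp (- (A * y^2 / 2 + B * y)))"
  have Ed: "(E has_real_derivative 0) (at y)" for y
  proof -
    have "(E has_real_derivative F2 0 y * exp (- (A * y^2 / 2 + B * y)) + F1 0 y * (exp (- (A * y^2 / 2 + B * y)) * (- (A * (2 * y) / 2 + B)))) (at y)"
      unfolding E_def by (rule derivative_eq_intros F1_deriv refl | simp)+
    moreover have "F2 0 y * exp (- (A * y^2 / 2 + B * y)) + F1 0 y * (exp (- (A * y^2 / 2 + B * y)) * (- (A * (2 * y) / 2 + B))) = 0"
      unfolding F_ode by (simp add: algebra_simps)
    ultimately show ?thesis by simp
  qed
  have F1pos: "F1 0 y > 0" for y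
  proof -
    have "E y = E 0" using DERIV_isconst_all[of E] Ed by blast
    then have "F1 0 y * exp (- (A * y^2 / 2 + B * y)) = \<rho>" by (simp add: E_def F1_0)
    then show ?thesis using \<rho>pos by (metis exp_gt_zero zero_less_mult_pos2)
  qed
  have Fge: "F 0 y \<ge> 1" if "y \<ge> 0" for y
  proof -
    have "F 0 0 \<le> F 0 y"
      by (rule DERIV_nonneg_imp_nondecreasing[OF that]) (use F_deriv F1pos less_imp_le in blast)
    then show ?thesis by (simp add: F_0)
  qed
  have Fpos: "F 0 y > 0" if "y \<ge> 0" for y using Fge[OF that] by simp
  define y1 where "y1 = max 0 ((2 * (A/2 + 2) - B) / A)"
  have y1: "y1 \<ge> 0" by (simp add: y1_def)
  have Ly1: "Lf y1 \<ge> A/2 + 2"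
  proof -
    have "y1 \<ge> (2 * (A/2 + 2) - B) / A" by (simp add: y1_def)
    then have "A * y1 \<ge> 2 * (A/2 + 2) - B" using Apos by (simp add: divide_le_eq mult.commute)
    then show ?thesis by (simp add: Lf_def)
  qed
  have Lpos: "Lf y1 > 0" using Ly1 Apos by simp
  have "(Lf y1)^2 \<ge> Lf y1" using Ly1 Apos by (simp add: power2_eq_square)
  then have Lsq: "(Lf y1)^2 > 0 + A/2" using Ly1 by simp
  have wle: "w 0 y1 \<le> Lf y1" by (rule notD_le[OF Fpos nD y1 Lpos Lsq])
  have wpos: "w 0 y1 > 0" using F1pos Fpos[OF y1] by (simp add: w_def)
  have "wd 0 y1 = w 0 y1 * (2 * Lf y1 - w 0 y1)" by (simp add: wd_def Lf_def power2_eq_square algebra_simps)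
  also have "\<dots> > 0" using wpos wle Lpos by simp
  finally have "wd 0 y1 > 0" .
  then show False using noD_contra[OF Fpos nD y1 wpos] by simp
qed

lemma R1_N: "((A + \<bar>B\<bar>)/2)^2 + pi^2 \<in> Nset"
proof (rule ccontr)
  define R1 where "R1 = ((A + \<bar>B\<bar>)/2)^2 + pi^2"
  assume "R1 \<notin> Nset"
  then have nn: "F R1 y \<ge> 0" if "y \<ge> 0" for y using that by (auto simp: Nset_def not_less)
  obtain y where y: "y \<in> {0..1}" "F R1 y \<le> 0" using sturm[of R1] by (auto simp: R1_def)
  have "F R1 y > 0" by (rule F_pos_of_nonneg[OF nn]) (use y in auto)
  then show False using y by simp
qed

lemma D_not_N:
  assumes "R \<in> Dset"
  shows "R \<notin> Nset"
proof -
  obtain y1 where y1: "y1 \<ge> 0" "Lf y1 > 0" "(Lf y1)^2 > R + A/2" "\<forall>t\<in>{0..y1}. F R t > 0"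
      "F1 R y1 > Lf y1 * F R y1"
    using assms by (auto simp: Dset_def)
  define \<Lambda> where "\<Lambda> = (\<lambda>y::real. A * y^2 / 4 + B * y / 2)"
  define g where "g = (\<lambda>y. Lf y * F R y - F1 R y)"
  define k where "k = (\<lambda>y. F R y * exp (- \<Lambda> y))"
  have kd: "(k has_real_derivative - g y * exp (- \<Lambda> y)) (at y)" for y
  proof -
    have "(k has_real_derivative F1 R y * exp (- \<Lambda> y) + F R y * (exp (- \<Lambda> y) * (- (A * (2 * y) / 4 + B / 2)))) (at y)"
      unfolding k_def \<Lambda>_def by (rule derivative_eq_intros F_deriv refl | simp)+
    moreover have "F1 R y * exp (- \<Lambda> y) + F R y * (exp (- \<Lambda> y) * (- (A * (2 * y) / 4 + B / 2))) = - g y * exp (- \<Lambda> y)"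
      by (simp add: g_def Lf_def field_simps)
    ultimately show ?thesis by simp
  qed
  have gd: "(g has_real_derivative (A/2 + R) * F R y - Lf y * F1 R y) (at y)" for y
  proof -
    have "(g has_real_derivative A * F R y / 2 + Lf y * F1 R y - F2 R y) (at y)"
      unfolding g_def Lf_def[abs_def] by (rule derivative_eq_intros F_deriv F1_deriv refl | simp)+
    moreover have "A * F R y / 2 + Lf y * F1 R y - F2 R y = (A/2 + R) * F R y - Lf y * F1 R y"
      by (simp add: F_ode Lf_def field_simps)
    ultimately show ?thesis by (simp only:)
  qed
  have kmono: "k a \<le> k b" if "a \<le> b" "\<And>t. a \<le> t \<Longrightarrow> t \<le> b \<Longrightarrow> g t \<le> 0" for a b
  proof (rule DERIV_nonneg_imp_nondecreasing[OF that(1)])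
    fix t assume "a \<le> t" "t \<le> b"
    then have "g t \<le> 0" using that(2) by simp
    then have "0 \<le> - g t * exp (- \<Lambda> t)" by (simp add: mult_nonpos_nonneg)
    then show "\<exists>d. (k has_real_derivative d) (at t) \<and> 0 \<le> d" using kd by blast
  qed
  have ky1: "k y1 > 0" using y1(1,4) by (simp add: k_def)
  have Lmono: "Lf y1 \<le> Lf y" if "y1 \<le> y" for y
    using that Apos by (simp add: Lf_def mult_left_mono)
  have gneg: "g y < 0" if "y \<ge> y1" for y
  proof (rule first_cross[OF gd _ _ that])
    show "g y1 < 0" using y1(5) by (simp add: g_def)
    fix c assume c: "c > y1" "g c = 0" "\<forall>t\<in>{y1..<c}. g t < 0"
    have "k y1 \<le> k c" by (rule kmono) (use c in \<open>auto simp: le_less\<close>)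
    then have kc: "k c > 0" using ky1 by simp
    then have Fc: "F R c > 0" by (simp add: k_def zero_less_mult_iff)
    have "Lf c \<ge> Lf y1" using Lmono c by simp
    then have "(Lf c)^2 \<ge> (Lf y1)^2" using y1(2) by (simp add: power_mono)
    then have Lsq: "(Lf c)^2 > R + A/2" using y1(3) by simp
    have F1c: "F1 R c = Lf c * F R c" using c(2) by (simp add: g_def)
    have "(A/2 + R) * F R c - Lf c * F1 R c = (A/2 + R - (Lf c)^2) * F R c"
      unfolding F1c by (simp add: power2_eq_square algebra_simps)
    also have "\<dots> < 0" using Lsq Fc by (simp add: mult_neg_pos)
    finally show "(A/2 + R) * F R c - Lf c * F1 R c < 0" .
  qed
  have "F R y \<ge> 0" if "y \<ge> 0" for y
  proof (cases "y \<le> y1")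
    case True then show ?thesis using y1(4) that by (auto intro: less_imp_le)
  next
    case False
    have "k y1 \<le> k y" by (rule kmono) (use False gneg in \<open>auto intro: less_imp_le\<close>)
    then have "k y > 0" using ky1 by simp
    then show ?thesis by (simp add: k_def zero_less_mult_iff)
  qed
  then show ?thesis by (auto simp: Nset_def not_less)
qed

lemma exists_good:
  assumes \<rho>pos: "\<rho> > 0"
  shows "\<exists>R>0. (\<forall>y\<ge>0. F R y > 0) \<and> (\<forall>y\<ge>0. w R y > 0) \<and> (\<forall>y\<ge>0. wd R y < 0) \<and> (w R \<longlongrightarrow> 0) at_top"
proof -
  define R1 where "R1 = ((A + \<bar>B\<bar>)/2)^2 + pi^2"
  have R1pos: "R1 > 0" unfolding R1_def by (simp add: add_nonneg_pos)
  have R1N: "R1 \<in> Nset" unfolding R1_def by (rule R1_N)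
  have 0: "0 \<in> Dset" by (rule D_zero[OF \<rho>pos])
  have disj: "Dset \<inter> Nset \<inter> {0..R1} = {}" using D_not_N by auto
  have "\<not> {0..R1} \<subseteq> Dset \<union> Nset"
  proof
    assume "{0..R1} \<subseteq> Dset \<union> Nset"
    from connectedD[OF connected_Icc open_Dset open_Nset disj this]
    show False using 0 R1N R1pos by auto
  qed
  then obtain R where R: "R \<in> {0..R1}" "R \<notin> Dset" "R \<notin> Nset" by blast
  have Rpos: "R > 0" using R 0 by (cases "R = 0") auto
  have nD: "R \<notin> Dset" by (rule R(2))
  have Fpos: "F R y > 0" if "y \<ge> 0" for y
    by (rule F_pos_of_nonneg) (use R(3) that in \<open>auto simp: Nset_def not_less\<close>)
  have wpos: "w R y1 > 0" if y1: "y1 \<ge> 0" for y1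
  proof (rule ccontr)
    assume "\<not> w R y1 > 0"
    then have w1: "w R y1 \<le> 0" by simp
    have wneg: "w R y < 0" if "y > y1" for y
    proof (rule stay_neg[where g = "w R" and g' = "wd R", OF _ w1 _ that])
      show "(w R has_real_derivative wd R t) (at t)" if t1: "t \<ge> y1" for t
      proof -
        have "t \<ge> 0" using t1 y1 by linarith
        then have "F R t \<noteq> 0" using Fpos by force
        then show ?thesis by (rule w_deriv)
      qed
      show "wd R c < 0" if "c \<ge> y1" "w R c = 0" for c using that Rpos by (simp add: wd_def)
    qed
    define y2 where "y2 = max (y1 + 1) (- B / A)"
    have y2: "y2 > y1" by (simp add: y2_def)
    define u where "u = (\<lambda>y. - 1 / w R y + y)"
    have "u y \<le> u y2" if "y \<ge> y2" for y
    proof (rule DERIV_nonpos_imp_nonincreasing[OF that])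
      fix t assume t: "y2 \<le> t" "t \<le> y"
      have Ft: "F R t \<noteq> 0" using Fpos[of t] t y1 y2 by simp
      have wt: "w R t < 0" using wneg[of t] t y2 by simp
      have ud: "(u has_real_derivative wd R t / (w R t)^2 + 1) (at t)"
      proof -
        have "(u has_real_derivative - (- (wd R t) / (w R t * w R t)) + 1) (at t)"
          unfolding u_def by (rule derivative_eq_intros w_deriv[OF Ft] refl | use wt in simp)+
        then show ?thesis by (simp add: power2_eq_square)
      qed
      have "A * t + B \<ge> 0"
      proof -
        have "t \<ge> - B / A" using t by (simp add: y2_def)
        then have "A * (- B / A) \<le> A * t" using Apos by (intro mult_left_mono) auto
        then show ?thesis using Apos by simp
      qed
      then have "(A * t + B) * w R t \<le> 0" using wt by (simp add: mult_nonneg_nonpos)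
      then have "wd R t \<le> - ((w R t)^2)" using Rpos by (simp add: wd_def)
      then have "wd R t / (w R t)^2 \<le> -1" using wt by (simp add: divide_le_eq)
      then show "\<exists>d. (u has_real_derivative d) (at t) \<and> d \<le> 0" using ud
        by (intro exI[of _ "wd R t / (w R t)^2 + 1"]) auto
    qed
    define y3 where "y3 = y2 - 1 / w R y2 + 1"
    have w2: "w R y2 < 0" using wneg y2 by simp
    have y3: "y3 \<ge> y2" using w2 by (simp add: y3_def)
    have "u y3 \<le> u y2" using y3 \<open>\<And>y. y \<ge> y2 \<Longrightarrow> u y \<le> u y2\<close> by blast
    then have "- 1 / w R y3 \<le> -1" by (simp add: u_def y3_def)
    moreover have "w R y3 < 0" using wneg y3 y2 by simp
    ultimately show False by (simp add: divide_le_eq)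
  qed
  have wdneg: "wd R y1 < 0" if y1: "y1 \<ge> 0" for y1
  proof (rule ccontr)
    assume "\<not> wd R y1 < 0"
    then consider "wd R y1 > 0" | "wd R y1 = 0" by linarith
    then show False
    proof cases
      case 1 then show False using noD_contra[OF Fpos nD y1 wpos[OF y1]] by simp
    next
      case 2
      have Fy: "F R y1 \<noteq> 0" using Fpos[OF y1] by simp
      have "A * w R y1 + (A * y1 + B) * wd R y1 - 2 * w R y1 * wd R y1 > 0"
        using 2 Apos wpos[OF y1] by simp
      then obtain d where d: "d > 0" "\<And>h. h > 0 \<Longrightarrow> h < d \<Longrightarrow> wd R y1 < wd R (y1 + h)"
        using DERIV_pos_inc_right[OF wd_deriv[OF Fy]] by force
      have "wd R (y1 + d/2) > 0" using d(2)[of "d/2"] d(1) 2 by simp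
      moreover have yy: "y1 + d/2 \<ge> 0" using y1 d(1) by simp
      ultimately show False using noD_contra[OF Fpos nD yy wpos[OF yy]] by simp
    qed
  qed
  have wdec: "w R b \<le> w R a" if "0 \<le> a" "a \<le> b" for a b
  proof (rule DERIV_nonpos_imp_nonincreasing[OF that(2)])
    fix t assume t: "a \<le> t" "t \<le> b"
    have "t \<ge> 0" using t that by linarith
    then have "F R t \<noteq> 0" using Fpos by force
    then have "(w R has_real_derivative wd R t) (at t)" by (rule w_deriv)
    moreover have "wd R t \<le> 0" using wdneg[of t] t that by simp
    ultimately show "\<exists>d. (w R has_real_derivative d) (at t) \<and> d \<le> 0" by blast
  qed
  have small: "\<exists>Y\<ge>0. w R Y < e" if e: "e > 0" for e
  proof (rule ccontr)
    assume "\<not> (\<exists>Y\<ge>0. w R Y < e)"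
    then have ge: "w R y \<ge> e" if "y \<ge> 0" for y using that by (auto simp: not_less)
    define y where "y = max 0 (((R + (w R 0)^2 + 1) / e - B) / A)"
    have y0: "y \<ge> 0" by (simp add: y_def)
    have "A * y + B \<ge> (R + (w R 0)^2 + 1) / e"
    proof -
      have "y \<ge> ((R + (w R 0)^2 + 1) / e - B) / A" by (simp add: y_def)
      then have "A * y \<ge> (R + (w R 0)^2 + 1) / e - B" using Apos by (simp add: divide_le_eq mult.commute)
      then show ?thesis by simp
    qed
    then have "(A * y + B) * e \<ge> R + (w R 0)^2 + 1" using e by (simp add: divide_le_eq)
    moreover have "(A * y + B) * w R y \<ge> (A * y + B) * e"
    proof -
      have "A * y + B \<ge> 0" using \<open>(A * y + B) * e \<ge> R + (w R 0)^2 + 1\<close> Rpos e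
        by (smt (verit) mult_nonpos_nonneg zero_le_power2)
      then show ?thesis using ge[OF y0] by (simp add: mult_left_mono)
    qed
    moreover have "(w R y)^2 \<le> (w R 0)^2"
      using wdec[of 0 y] y0 ge[OF y0] e by (intro power_mono) auto
    ultimately have "wd R y \<ge> 1" by (simp add: wd_def)
    then show False using wdneg[OF y0] by simp
  qed
  have lim: "(w R \<longlongrightarrow> 0) at_top"
  proof (rule order_tendstoI)
    fix a :: real assume "a < 0"
    then show "eventually (\<lambda>y. a < w R y) at_top"
      using wpos by (auto simp: eventually_at_top_linorder intro!: exI[of _ 0] less_trans[OF \<open>a < 0\<close>])
  next
    fix e :: real assume "e > 0"
    then obtain Y where Y: "Y \<ge> 0" "w R Y < e" using small by blast
    have "w R y < e" if "y \<ge> Y" for y using wdec[OF Y(1) that] Y(2) by simp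
    then show "eventually (\<lambda>y. w R y < e) at_top" by (auto simp: eventually_at_top_linorder)
  qed
  show ?thesis using Rpos Fpos wpos wdneg lim by blast
qed

end



theorem theorem1:
  fixes \<sigma> \<eta> \<alpha> h r a :: real
  assumes "\<sigma> > 0" "\<eta> > 0" "\<alpha> > 0" "h > 0" "r \<ge> 0"
  shows "\<exists>\<beta> v v'. \<beta> > 0 \<and>
     (\<forall>y\<ge>0. (v has_real_derivative v' y) (at y within {0..})) \<and>
     continuous_on {0..} v' \<and>
     (\<forall>y\<ge>0. \<beta> = - (\<alpha> / 4) * (v y)\<^sup>2 + (1/2) * \<sigma>\<^sup>2 * v' y - \<eta> * y * v y + a * v y + h * y) \<and>
     v 0 = - r \<and>
     mono_on {0..} v \<and>
     (v \<longlongrightarrow> h / \<eta>) at_top"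
proof -
  note pos = assms
  define A where "A = 2 * \<eta> / \<sigma>\<^sup>2"
  define ys where "ys = (a - \<alpha> * h / (2 * \<eta>)) / \<eta>"
  define B where "B = - A * ys"
  define k where "k = 2 * \<sigma>\<^sup>2 / \<alpha>"
  define H where "H = h / \<eta>"
  define \<rho> where "\<rho> = (H + r) / k"
  have etanz: "\<eta> \<noteq> 0" using pos by simp
  have Apos: "A > 0" using pos by (simp add: A_def)
  have kpos: "k > 0" using pos by (simp add: k_def)
  have Hpos: "H > 0" using pos by (simp add: H_def)
  have \<rho>pos: "\<rho> > 0" using kpos Hpos pos by (simp add: \<rho>_def)
  interpret ode A B \<rho> by unfold_locales (rule Apos)
  obtain R where R: "R > 0" and Fpos: "\<And>y. y \<ge> 0 \<Longrightarrow> F R y > 0"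
    and wpos: "\<And>y. y \<ge> 0 \<Longrightarrow> w R y > 0" and wdneg: "\<And>y. y \<ge> 0 \<Longrightarrow> wd R y < 0"
    and lim: "(w R \<longlongrightarrow> 0) at_top"
    using exists_good[OF \<rho>pos] by blast
  define v where "v = (\<lambda>y. H - k * w R y)"
  define v' where "v' = (\<lambda>y. - k * wd R y)"
  define \<beta> where "\<beta> = (\<sigma>\<^sup>2)\<^sup>2 / \<alpha> * R + H * (a - \<alpha> * H / 4)"
  have vd: "(v has_real_derivative v' y) (at y)" if "y \<ge> 0" for y
  proof -
    have "F R y \<noteq> 0" using Fpos[OF that] by simp
    from w_deriv[OF this] show ?thesis unfolding v_def v'_def
      by (auto intro!: derivative_eq_intros)
  qed
  have eq0: "(\<sigma>\<^sup>2)\<^sup>2 / \<alpha> * R + H * (a - \<alpha> * H / 4) = - (\<alpha> / 4) * (H - k * W)\<^sup>2 + (1/2) * \<sigma>\<^sup>2 * (- k * ((A * y + B) * W - R - W\<^sup>2))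
      - \<eta> * y * (H - k * W) + a * (H - k * W) + h * y" for W y :: real
    unfolding A_def B_def ys_def k_def H_def
    using pos by (simp add: field_simps power2_eq_square)
  have eq: "\<beta> = - (\<alpha> / 4) * (v y)\<^sup>2 + (1/2) * \<sigma>\<^sup>2 * v' y - \<eta> * y * v y + a * v y + h * y" for y
    unfolding \<beta>_def v_def v'_def wd_def by (rule eq0)
  have v0: "v 0 = - r"
  proof -
    have "w R 0 = \<rho>" by (simp add: w_def F_0 F1_0)
    then show ?thesis using kpos by (simp add: v_def \<rho>_def)
  qed
  have wdec: "w R b \<le> w R a" if "0 \<le> a" "a \<le> b" for a b
  proof (rule DERIV_nonpos_imp_nonincreasing[OF that(2)])
    fix t assume t: "a \<le> t" "t \<le> b"
    have "t \<ge> 0" using t that by linarith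
    then have "F R t \<noteq> 0" using Fpos by force
    then have "(w R has_real_derivative wd R t) (at t)" by (rule w_deriv)
    moreover have "wd R t \<le> 0" using wdneg[of t] t that by simp
    ultimately show "\<exists>d. (w R has_real_derivative d) (at t) \<and> d \<le> 0" by blast
  qed
  have mono: "mono_on {0..} v"
  proof (rule mono_onI)
    fix x y :: real assume "x \<in> {0..}" "y \<in> {0..}" "x \<le> y"
    then have "w R y \<le> w R x" using wdec by simp
    then show "v x \<le> v y" using kpos by (simp add: v_def mult_left_mono)
  qed
  have vlim: "(v \<longlongrightarrow> h / \<eta>) at_top"
  proof -
    have "((\<lambda>y. H - k * w R y) \<longlongrightarrow> H - k * 0) at_top"
      by (intro tendsto_intros lim)
    then show ?thesis by (simp add: v_def H_def)
  qed
  have v'cont: "continuous_on {0..} v'"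
  proof -
    have "(wd R has_field_derivative (A * w R y + (A * y + B) * wd R y - 2 * w R y * wd R y)) (at y within {0..})"
      if "y \<in> {0..}" for y
    proof -
      have "F R y \<noteq> 0" using Fpos that by force
      from wd_deriv[OF this] show ?thesis by (rule has_field_derivative_at_within)
    qed
    then have "continuous_on {0..} (wd R)" by (rule DERIV_continuous_on)
    then show ?thesis unfolding v'_def by (intro continuous_intros)
  qed
  have \<beta>pos: "\<beta> > 0"
  proof (rule ccontr)
    assume "\<not> \<beta> > 0"
    then have b0: "\<beta> \<le> 0" by simp
    define E where "E = (\<lambda>y. exp ((2 / \<sigma>\<^sup>2) * (a * y - \<eta> * y\<^sup>2 / 2 - \<alpha> * h * y / (2 * \<eta>))))"
    define \<Psi> where "\<Psi> = (\<lambda>y. - (\<sigma>\<^sup>2 / 2) * (E y * (H * (F R y)\<^sup>2 - k * F1 R y * F R y)))"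
    have \<Psi>d: "(\<Psi> has_real_derivative E y * ((F R y)\<^sup>2 * (h * y - \<beta>) + \<alpha> / 4 * (H * F R y - k * F1 R y)\<^sup>2)) (at y)" for y
    proof -
      have "(\<Psi> has_real_derivative - (\<sigma>\<^sup>2 / 2) * (E y * ((2 / \<sigma>\<^sup>2) * (a - \<eta> * (2 * y) / 2 - \<alpha> * h / (2 * \<eta>))) * (H * (F R y)\<^sup>2 - k * F1 R y * F R y)
            + E y * (H * (2 * F R y * F1 R y) - k * (F2 R y * F R y + F1 R y * F1 R y)))) (at y)"
        unfolding \<Psi>_def E_def
        by (rule derivative_eq_intros F_deriv F1_deriv refl | simp add: etanz)+ (simp add: field_simps power2_eq_square)
      moreover have "- (\<sigma>\<^sup>2 / 2) * (E0 * ((2 / \<sigma>\<^sup>2) * (a - \<eta> * (2 * y) / 2 - \<alpha> * h / (2 * \<eta>))) * (H * Fv\<^sup>2 - k * F1v * Fv)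
            + E0 * (H * (2 * Fv * F1v) - k * (((A * y + B) * F1v - R * Fv) * Fv + F1v * F1v)))
          = E0 * (Fv\<^sup>2 * (h * y - \<beta>) + \<alpha> / 4 * (H * Fv - k * F1v)\<^sup>2)" for E0 Fv F1v :: real
        unfolding \<beta>_def A_def B_def ys_def k_def H_def
        using pos by (simp add: field_simps power2_eq_square)
      note this[of "E y" "F R y" "F1 R y", folded F_ode]
      ultimately show ?thesis by simp
    qed
    have "eventually (\<lambda>y. v y > 0) at_top"
      using order_tendstoD(1)[OF vlim, of 0] pos by simp
    then obtain Y0 where Y0: "\<And>y. y \<ge> Y0 \<Longrightarrow> v y > 0" by (auto simp: eventually_at_top_linorder)
    define Y where "Y = max 0 Y0"
    have Y: "Y \<ge> 0" "v Y > 0" using Y0[of Y] by (auto simp: Y_def)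
    have "\<Psi> 0 \<le> \<Psi> Y"
    proof (rule DERIV_nonneg_imp_nondecreasing[OF Y(1)])
      fix t assume t: "0 \<le> t" "t \<le> Y"
      have "h * t \<ge> 0" using t pos by simp
      then have "h * t - \<beta> \<ge> 0" using b0 by simp
      then have "(F R t)\<^sup>2 * (h * t - \<beta>) + \<alpha> / 4 * (H * F R t - k * F1 R t)\<^sup>2 \<ge> 0"
        using pos by (intro add_nonneg_nonneg mult_nonneg_nonneg) auto
      then have "E t * ((F R t)\<^sup>2 * (h * t - \<beta>) + \<alpha> / 4 * (H * F R t - k * F1 R t)\<^sup>2) \<ge> 0"
        by (simp add: E_def)
      then show "\<exists>d. (\<Psi> has_real_derivative d) (at t) \<and> 0 \<le> d" using \<Psi>d by blast
    qed
    moreover have "\<Psi> 0 \<ge> 0"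
    proof -
      have "\<Psi> 0 = - (\<sigma>\<^sup>2 / 2) * (H - k * \<rho>)" by (simp add: \<Psi>_def E_def F_0 F1_0)
      also have "\<dots> = (\<sigma>\<^sup>2 / 2) * r" using kpos by (simp add: \<rho>_def)
      also have "\<dots> \<ge> 0" using pos by simp
      finally show ?thesis .
    qed
    moreover have "\<Psi> Y < 0"
    proof -
      have FY: "F R Y > 0" using Fpos Y by simp
      have "H * (F R Y)\<^sup>2 - k * F1 R Y * F R Y = (F R Y)\<^sup>2 * v Y"
        using FY by (simp add: v_def w_def field_simps power2_eq_square)
      then have "\<Psi> Y = - (\<sigma>\<^sup>2 / 2) * (E Y * ((F R Y)\<^sup>2 * v Y))" by (simp add: \<Psi>_def)
      moreover have "E Y * ((F R Y)\<^sup>2 * v Y) > 0" using FY Y by (simp add: E_def)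
      ultimately show ?thesis using pos by (simp add: mult_neg_pos)
    qed
    ultimately show False by simp
  qed
  show ?thesis
  proof (intro exI conjI)
    show "\<beta> > 0" by (rule \<beta>pos)
    show "\<forall>y\<ge>0. (v has_real_derivative v' y) (at y within {0..})"
      using vd by (auto intro: has_field_derivative_at_within)
    show "continuous_on {0..} v'" by (rule v'cont)
    show "\<forall>y\<ge>0. \<beta> = - (\<alpha> / 4) * (v y)\<^sup>2 + (1/2) * \<sigma>\<^sup>2 * v' y - \<eta> * y * v y + a * v y + h * y"
      using eq by blast
    show "v 0 = - r" by (rule v0)
    show "mono_on {0..} v" by (rule mono)
    show "(v \<longlongrightarrow> h / \<eta>) at_top" by (rule vlim)
  qed
qed


end
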